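(* Let $X$ be the Fermi surface (at time $0$) of a geodesic observer in anti-de Sitter space-time with cosmological constant $\lambda<0$, identified via global Fermi coordinates with $\mathbb{R}^3$, $\rho=|x|$, with space-time metric $ds^2=-c^2\cosh^2(a\rho)dt^2+d\rho^2+a^{-2}\sinh^2(a\rho)(d\theta^2+\sin^2\theta\,d\phi^2)$, $a=\sqrt{|\lambda|/3}$. For $\beta>0$, $z>0$, particle mass $m>0$ and bounded Borel $\Lambda\subset X$, let the ideal gas partition function be $$Z_\Lambda(\varnothing)=e^{-\beta|\Lambda|\rho_{\text{vac}}}\sum_{n\ge0}\frac{z^n}{n!}\Big(\int_\Lambda\frac{K_2(\gamma(x))}{\gamma(x)}d\mathbf{x}\Big)^n,\qquad \gamma(x)=\beta mc^2\cosh(a\rho),$$ with $\rho_{\text{vac}}=\lambda c^4/(8\pi G)$. Let $\Lambda_k$ be the ball of radius $k$ centered at the origin. Then the infinite volume pressure $P=\lim_{k\to\infty}\frac{\log Z_{\Lambda_k}(\varnothing)}{\beta|\Lambda_k|}$ exists and $$P=-\frac{\lambda c^4}{8\pi G}.$$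
   Context: $K_2$ is the modified Bessel function of the second kind, $c$ is the speed of light and $G$ Newton's gravitational constant. $d\mathbf{x}=dx^1dx^2dx^3$ is Lebesgue measure in the Fermi coordinates, while $|\Lambda|$ denotes the Riemannian volume of $\Lambda$ for the induced metric $d\rho^2+a^{-2}\sinh^2(a\rho)(d\theta^2+\sin^2\theta d\phi^2)$ on $X$ (balls are taken with respect to the radial coordinate $\rho$, which is proper distance from the origin). *)

theory Defs
  imports "HOL-Analysis.Analysis"
begin

definition besselK2 :: "real \<Rightarrow> real" where
  "besselK2 x = (LINT t:{0..}|lborel. exp (- x * cosh t) * cosh (2 * t))"

definition ads_a :: "real \<Rightarrow> real" where
  "ads_a lam = sqrt (\<bar>lam\<bar> / 3)"

text \<open>Density of the Riemannian volume of the metric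
  d rho^2 + a^-2 sinh^2(a rho) (d theta^2 + sin^2 theta d phi^2)
  with respect to Lebesgue measure in the Cartesian Fermi coordinates (rho = |x|):
  (sinh(a rho)/(a rho))^2, extended by 1 at the origin.\<close>
definition ads_vol_density :: "real \<Rightarrow> real \<Rightarrow> real" where
  "ads_vol_density a r = (if r = 0 then 1 else (sinh (a * r) / (a * r))^2)"

definition ads_volume :: "real \<Rightarrow> (real^3) set \<Rightarrow> real" where
  "ads_volume a \<Lambda> = (LINT x:\<Lambda>|lborel. ads_vol_density a (norm x))"

definition rho_vac :: "real \<Rightarrow> real \<Rightarrow> real \<Rightarrow> real" where
  "rho_vac lam c G = lam * c ^ 4 / (8 * pi * G)"

definition ads_gamma :: "real \<Rightarrow> real \<Rightarrow> real \<Rightarrow> real \<Rightarrow> real^3 \<Rightarrow> real" where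
  "ads_gamma a \<beta> m c x = \<beta> * m * c ^ 2 * cosh (a * norm x)"

definition partition_fn ::
  "real \<Rightarrow> real \<Rightarrow> real \<Rightarrow> real \<Rightarrow> real \<Rightarrow> real \<Rightarrow> (real^3) set \<Rightarrow> real" where
  "partition_fn lam c G \<beta> z m \<Lambda> =
     exp (- \<beta> * ads_volume (ads_a lam) \<Lambda> * rho_vac lam c G) *
     (\<Sum>n. z ^ n / fact n *
        (LINT x:\<Lambda>|lborel. besselK2 (ads_gamma (ads_a lam) \<beta> m c x)
                              / ads_gamma (ads_a lam) \<beta> m c x) ^ n)"

end

theory Submission imports Defs "HOL-Real_Asymp.Real_Asymp" begin

lemma exp_int: "set_integrable lborel {0::real..} (\<lambda>t. exp (- t))"
proof -
  have "(\<lambda>t. exp (-1*t)) integrable_on {0::real..}" by (rule integrable_on_exp_minus_to_infinity) simp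
  hence "(\<lambda>t::real. exp (-t)) absolutely_integrable_on {0..}" by (intro nonnegative_absolutely_integrable_1) auto
  hence "integrable (completion lborel) (\<lambda>t::real. indicator {0..} t *\<^sub>R exp (-t))"
    unfolding set_integrable_def .
  moreover have "(\<lambda>t::real. indicator {0..} t *\<^sub>R exp (-t)) \<in> borel_measurable lborel" by measurable
  ultimately show ?thesis unfolding set_integrable_def using integrable_completion by blast
qed

lemma dens_meas: "(\<lambda>x::real^3. ads_vol_density a (norm x)) \<in> borel_measurable lborel"
  unfolding ads_vol_density_def
  apply measurable
    apply (intro borel_measurable_continuous_onI continuous_intros)
   apply (simp add: measurable_lborel1 borel_measurable_continuous_onI continuous_intros)
  apply simp
  done

lemma sinh_le: "0 \<le> y \<Longrightarrow> sinh y \<le> y * cosh (y::real)"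
proof -
  assume y: "0 \<le> y"
  have "(\<lambda>y. y * cosh y - sinh y) 0 \<le> (\<lambda>y. y * cosh y - sinh y) y"
    by (rule DERIV_nonneg_imp_nondecreasing[OF y])
       (auto intro!: exI derivative_eq_intros mult_nonneg_nonneg)
  then show ?thesis by simp
qed

lemma pt_bound:
  fixes x0 x t :: real
  assumes x0: "x0 > 0" and xx: "x0 \<le> x" and t: "0 \<le> t"
  shows "exp (- x * cosh t) * cosh (2 * t) \<le> exp (9 / x0) * exp (- t)"
proof -
  have c1: "cosh (2*t) \<le> exp (2*t)"
    unfolding cosh_field_def using t by simp
  have "t^2/4 \<le> (1 + t + t\<^sup>2 / 2)/2" using t by (simp add: power2_eq_square)
  also have "\<dots> \<le> exp t / 2" using exp_lower_Taylor_quadratic[OF t] by simp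
  also have "\<dots> \<le> cosh t" unfolding cosh_field_def by simp
  finally have ct: "t^2/4 \<le> cosh t" .
  have q: "3*t - x0 * (t^2/4) \<le> 9/x0"
  proof -
    have "0 \<le> (x0*t - 6)^2" by simp
    hence "0 \<le> (x0*t-6)^2 / (4*x0)" using x0 by simp
    moreover have "(x0*t-6)^2 / (4*x0) = 9/x0 - (3*t - x0 * (t^2/4))"
      using x0 by (simp add: field_simps power2_eq_square)
    ultimately show ?thesis by linarith
  qed
  have "3*t - x0 * cosh t \<le> 3*t - x0 * (t^2/4)"
    using ct x0 by (simp add: mult_left_mono)
  with q have q2: "2*t - x0 * cosh t \<le> 9/x0 - t" by linarith
  have "exp (- x * cosh t) * cosh (2 * t) \<le> exp (- x0 * cosh t) * exp (2*t)"
    apply (rule mult_mono)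
    using xx cosh_real_ge_1[of t] c1 by (auto intro!: mult_right_mono)
  also have "\<dots> = exp (2*t - x0 * cosh t)" by (simp add: exp_add[symmetric])
  also have "\<dots> \<le> exp (9/x0 - t)" using q2 by simp
  also have "\<dots> = exp (9 / x0) * exp (- t)" by (simp add: exp_diff exp_minus field_simps)
  finally show ?thesis .
qed

definition KT :: "real \<Rightarrow> real" where
  "KT x0 = exp (9 / x0) * (LINT t:{0..}|lborel. exp (- t))"

lemma K2_bound:
  assumes x0: "x0 > 0" and xx: "x0 \<le> x"
  shows "0 \<le> besselK2 x" "besselK2 x \<le> KT x0"
proof -
  let ?f = "\<lambda>t::real. indicator {0..} t *\<^sub>R (exp (- x * cosh t) * cosh (2 * t))"
  let ?g = "\<lambda>t::real. indicator {0..} t *\<^sub>R (exp (9 / x0) * exp (- t))"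
  have gi: "integrable lborel ?g"
    using exp_int unfolding set_integrable_def
    by (simp add: integrable_mult_right mult.left_commute[of "indicator _ _"])
  have ig: "integral\<^sup>L lborel ?g = KT x0"
    unfolding KT_def set_lebesgue_integral_def
    by (simp add: mult.left_commute[of "indicator _ _"])
  have fg: "?f t \<le> ?g t" for t
    using pt_bound[OF x0 xx, of t] by (auto simp: indicator_def)
  have f0: "0 \<le> ?f t" for t
    by (auto simp: indicator_def)
  show "0 \<le> besselK2 x"
    unfolding besselK2_def set_lebesgue_integral_def using f0 by (simp add: Bochner_Integration.integral_nonneg)
  have g0: "0 \<le> integral\<^sup>L lborel ?g"
    using f0 fg by (intro Bochner_Integration.integral_nonneg) (meson order.trans)
  show "besselK2 x \<le> KT x0"
  proof (cases "integrable lborel ?f")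
    case True
    then show ?thesis unfolding besselK2_def set_lebesgue_integral_def ig[symmetric]
      by (intro integral_mono[OF True gi]) (use fg in auto)
  next
    case False
    have "besselK2 x = 0" unfolding besselK2_def set_lebesgue_integral_def
      using False by (simp add: not_integrable_integral_eq)
    then show ?thesis using g0 ig by linarith
  qed
qed

lemma dens_nonneg: "0 \<le> ads_vol_density a r"
  unfolding ads_vol_density_def by simp

lemma dens_upper:
  assumes a: "a > 0" and r: "0 \<le> r" "r \<le> k"
  shows "ads_vol_density a r \<le> cosh (a * k) ^ 2"
proof (cases "r = 0")
  case True
  have "1 \<le> cosh (a*k)" by (rule cosh_real_ge_1)
  hence "1 \<le> cosh (a*k)^2" by (simp add: one_le_power)
  then show ?thesis using True by (simp add: ads_vol_density_def)
next
  case False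
  hence y: "a * r > 0" using a r by simp
  have "sinh (a*r) / (a*r) \<le> cosh (a*r)"
    using sinh_le[of "a*r"] y by (simp add: divide_le_eq mult.commute)
  moreover have "0 \<le> sinh (a*r) / (a*r)" using y by simp
  ultimately have "(sinh (a*r) / (a*r))^2 \<le> cosh (a*r)^2" by (rule power_mono)
  also have "cosh (a*r) \<le> cosh (a*k)" using a r y
    by (subst cosh_real_nonneg_le_iff) (auto intro: mult_left_mono)
  hence "cosh (a*r)^2 \<le> cosh (a*k)^2" by (intro power_mono) auto
  finally show ?thesis using False by (simp add: ads_vol_density_def)
qed

lemma dens_lower:
  assumes a: "a > 0" and k: "k > 0" and r: "k/2 \<le> r" "r \<le> k"
  shows "(sinh (a*k/2) / (a*k))^2 \<le> ads_vol_density a r"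
proof -
  have r0: "r \<noteq> 0" "a*r > 0" using r k a by auto
  have "sinh (a*k/2) \<le> sinh (a*r)" using r a by (simp add: mult_left_mono)
  moreover have "0 < sinh (a*k/2)" using a k by simp
  moreover have "a*r \<le> a*k" using r a by simp
  ultimately have "sinh (a*k/2) / (a*k) \<le> sinh (a*r) / (a*r)"
    using r0 by (intro frac_le) auto
  moreover have "0 \<le> sinh (a*k/2) / (a*k)" using a k by simp
  ultimately show ?thesis using r0 by (simp add: ads_vol_density_def power_mono)
qed

lemma dens_int:
  assumes a: "a > 0"
  shows "set_integrable lborel (ball (0::real^3) k) (\<lambda>x. ads_vol_density a (norm x))"
  unfolding set_integrable_def
  apply (rule integrableI_bounded_set_indicator[where B="cosh (a*k)^2"])
     apply simp
    apply (rule dens_meas)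
   apply (rule emeasure_lborel_ball_finite)
  apply (rule AE_I2)
  using dens_upper[OF a] dens_nonneg by (auto simp: dist_norm)

lemma ball_meas: "r \<ge> 0 \<Longrightarrow> measure lborel (ball (0::real^3) r) = r^3 * measure lborel (ball (0::real^3) 1)"
  using content_ball_conv_unit_ball[of r "0::real^3"] by simp



theorem corollary2:
  fixes lam c G \<beta> z m :: real
  assumes "lam < 0" and "c > 0" and "G > 0" and "\<beta> > 0" and "z > 0" and "m > 0"
  shows "(\<lambda>k::nat. ln (partition_fn lam c G \<beta> z m (ball 0 (real k)))
                   / (\<beta> * ads_volume (ads_a lam) (ball 0 (real k))))
         \<longlonglongrightarrow> - (lam * c ^ 4 / (8 * pi * G))"
proof -
  note lam = assms(1) and cpos = assms(2) and Gp = assms(3) and bp = assms(4) and zp = assms(5) and mp = assms(6)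
  define a where "a = ads_a lam"
  have a: "a > 0" unfolding a_def ads_a_def using lam by simp
  define x0 where "x0 = \<beta> * m * c^2"
  have x0: "x0 > 0" unfolding x0_def using bp mp cpos by simp
  define u where "u = measure lborel (ball (0::real^3) 1)"
  have u: "u > 0" unfolding u_def using content_ball_pos[of 1 "0::real^3"] by simp
  define \<rho> where "\<rho> = rho_vac lam c G"
  define V where "V = (\<lambda>r::real. ads_volume a (ball 0 r))"
  define I where "I = (\<lambda>r::real. LINT x:ball (0::real^3) r|lborel. besselK2 (ads_gamma a \<beta> m c x) / ads_gamma a \<beta> m c x)"
  define D where "D = (\<lambda>r::real. (sinh (a*r/2) / (a*r))^2)"
  define C where "C = 8 * z * (KT x0 / x0) / (7 * \<beta>)"
  have gam: "x0 \<le> ads_gamma a \<beta> m c x" for x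
  proof -
    have "x0 * 1 \<le> x0 * cosh (a * norm x)" using x0 cosh_real_ge_1 by (intro mult_left_mono) auto
    thus ?thesis unfolding ads_gamma_def x0_def by simp
  qed
  have phi: "0 \<le> besselK2 (ads_gamma a \<beta> m c x) / ads_gamma a \<beta> m c x"
            "besselK2 (ads_gamma a \<beta> m c x) / ads_gamma a \<beta> m c x \<le> KT x0 / x0" for x
  proof -
    have g: "x0 \<le> ads_gamma a \<beta> m c x" by (rule gam)
    note kb = K2_bound[OF x0 g]
    have KT0: "0 \<le> KT x0" using kb by linarith
    show "0 \<le> besselK2 (ads_gamma a \<beta> m c x) / ads_gamma a \<beta> m c x"
      using kb g x0 by simp
    have "besselK2 (ads_gamma a \<beta> m c x) / ads_gamma a \<beta> m c x \<le> KT x0 / ads_gamma a \<beta> m c x"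
      using kb g x0 by (intro divide_right_mono) auto
    also have "\<dots> \<le> KT x0 / x0" using g x0 KT0 by (intro divide_left_mono) auto
    finally show "besselK2 (ads_gamma a \<beta> m c x) / ads_gamma a \<beta> m c x \<le> KT x0 / x0" .
  qed
  have Ibound: "0 \<le> I r \<and> I r \<le> KT x0 / x0 * (r^3 * u)" if r: "r \<ge> 0" for r
  proof -
    let ?phi = "\<lambda>x. besselK2 (ads_gamma a \<beta> m c x) / ads_gamma a \<beta> m c x"
    have ci: "set_integrable lborel (ball (0::real^3) r) (\<lambda>x. KT x0 / x0)"
      unfolding set_integrable_def
      by (rule integrableI_bounded_set_indicator[where B="\<bar>KT x0 / x0\<bar>"], simp, simp, rule emeasure_lborel_ball_finite, simp)
    have cv: "(LINT x:ball (0::real^3) r|lborel. KT x0 / x0) = KT x0 / x0 * (r^3 * u)"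
      using ball_meas[OF r] emeasure_lborel_ball_finite[of "0::real^3" r]
      by (subst set_integral_const) (auto simp: u_def)
    have nn: "0 \<le> I r"
      unfolding I_def set_lebesgue_integral_def using phi(1)
      by (intro Bochner_Integration.integral_nonneg) (simp add: indicator_def)
    have "I r \<le> KT x0 / x0 * (r^3 * u)"
    proof (cases "set_integrable lborel (ball (0::real^3) r) ?phi")
      case True
      then show ?thesis unfolding I_def cv[symmetric]
        by (intro set_integral_mono[OF True ci]) (use phi(2) in auto)
    next
      case False
      hence "I r = 0" unfolding I_def set_lebesgue_integral_def set_integrable_def
        by (simp add: not_integrable_integral_eq)
      moreover have "0 \<le> KT x0 / x0 * (r^3 * u)"
      proof -
        have "0 \<le> KT x0 / x0" using phi[of 0] by linarith
        thus ?thesis using r u by (intro mult_nonneg_nonneg) auto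
      qed
      ultimately show ?thesis by simp
    qed
    with nn show ?thesis by simp
  qed
  have Vbound: "V r \<ge> D r * (7/8 * (r^3 * u))" if r: "r > 0" for r
  proof -
    let ?A = "ball (0::real^3) r - ball 0 (r/2)"
    have sA: "?A \<in> sets lborel" by simp
    have fA: "emeasure lborel ?A < \<infinity>"
      using emeasure_lborel_ball_finite[of "0::real^3" r]
    proof -
      have "emeasure lborel ?A \<le> emeasure lborel (ball (0::real^3) r)"
        by (intro emeasure_mono) auto
      thus ?thesis using emeasure_lborel_ball_finite[of "0::real^3" r] by (simp add: top.not_eq_extremum order_le_less_trans)
    qed
    have mA: "measure lborel ?A = 7/8 * (r^3 * u)"
    proof -
      have "measure lborel ?A = measure lborel (ball (0::real^3) r) - measure lborel (ball (0::real^3) (r/2))"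
        apply (rule measure_Diff)
        using emeasure_lborel_ball_finite[of "0::real^3" r] r by (auto simp: subset_ball)
      also have "\<dots> = r^3 * u - (r/2)^3 * u" using r ball_meas[of r] ball_meas[of "r/2"] unfolding u_def by simp
      also have "\<dots> = 7/8 * (r^3 * u)" by (simp add: power_divide field_simps)
      finally show ?thesis .
    qed
    have "D r * (7/8 * (r^3 * u)) = integral\<^sup>L lborel (\<lambda>x. D r * indicator ?A x)"
      using mA by (simp add: integral_indicator)
    also have "\<dots> \<le> integral\<^sup>L lborel (\<lambda>x. indicator (ball (0::real^3) r) x *\<^sub>R ads_vol_density a (norm x))"
    proof (rule Bochner_Integration.integral_mono)
      show "integrable lborel (\<lambda>x. D r * indicator ?A x)"
        using fA by (intro integrable_mult_right integrable_real_indicator) auto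
      show "integrable lborel (\<lambda>x. indicator (ball (0::real^3) r) x *\<^sub>R ads_vol_density a (norm x))"
        using dens_int[OF a] unfolding set_integrable_def .
      fix x :: "real^3"
      show "D r * indicator ?A x \<le> indicator (ball (0::real^3) r) x *\<^sub>R ads_vol_density a (norm x)"
      proof (cases "x \<in> ?A")
        case True
        hence "r/2 \<le> norm x" "norm x \<le> r" by (auto simp: dist_norm)
        then show ?thesis using True dens_lower[OF a r] unfolding D_def by auto
      next
        case False
        then show ?thesis using dens_nonneg by (auto simp: indicator_def)
      qed
    qed
    also have "\<dots> = V r" unfolding V_def ads_volume_def set_lebesgue_integral_def by simp
    finally show ?thesis .
  qed
  have Dpos: "D r > 0" if "r > 0" for r unfolding D_def using a that by simp
  have Vpos: "V r > 0" if "r > 0" for r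
  proof -
    have "0 < D r * (7/8 * (r^3 * u))" using Dpos[OF that] that u by simp
    thus ?thesis using Vbound[OF that] by linarith
  qed
  have Zeq: "partition_fn lam c G \<beta> z m (ball 0 r) = exp (- \<beta> * V r * \<rho>) * exp (z * I r)" for r
  proof -
    have "(\<lambda>n. (z * I r)^n /\<^sub>R fact n) sums exp (z * I r)" by (rule exp_converges)
    hence "(\<lambda>n. z ^ n / fact n * I r ^ n) sums exp (z * I r)"
      by (simp add: power_mult_distrib field_simps)
    hence "(\<Sum>n. z ^ n / fact n * I r ^ n) = exp (z * I r)" by (rule sums_unique[symmetric])
    thus ?thesis unfolding partition_fn_def V_def I_def \<rho>_def a_def by simp
  qed
  define e where "e = (\<lambda>k::nat. z * I (real k) / (\<beta> * V (real k)))"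
  have eq: "ln (partition_fn lam c G \<beta> z m (ball 0 (real k))) / (\<beta> * ads_volume (ads_a lam) (ball 0 (real k)))
         = - \<rho> + e k" if "k \<ge> 1" for k
  proof -
    have "V (real k) > 0" using Vpos that by simp
    thus ?thesis unfolding Zeq e_def using bp
      by (simp add: ln_mult V_def a_def field_simps)
  qed
  have Dlim: "filterlim (\<lambda>k::nat. D (real k)) at_top sequentially"
    unfolding D_def using a by real_asymp
  have invD: "(\<lambda>k::nat. C * inverse (D (real k))) \<longlonglongrightarrow> 0"
    using tendsto_mult_right_zero[OF tendsto_inverse_0_at_top[OF Dlim]] by simp
  have ebound: "0 \<le> e k \<and> e k \<le> C * inverse (D (real k))" if "k \<ge> 1" for k
  proof -
    let ?r = "real k"
    have r: "?r > 0" using that by simp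
    note Ib = Ibound[of ?r]
    have Vp: "V ?r > 0" by (rule Vpos[OF r])
    have D0: "D ?r > 0" by (rule Dpos[OF r])
    have e0: "0 \<le> e k" unfolding e_def using Ib Vp zp bp r by simp
    have "e k \<le> z * (KT x0 / x0 * (?r^3 * u)) / (\<beta> * (D ?r * (7/8 * (?r^3 * u))))"
    proof -
      have KTn: "0 \<le> KT x0 / x0" using phi(1)[of 0] phi(2)[of 0] by linarith
      have num0: "0 \<le> z * (KT x0 / x0 * (?r^3 * u))" using KTn zp u r by (intro mult_nonneg_nonneg) auto
      have le1: "z * I ?r \<le> z * (KT x0 / x0 * (?r^3 * u))" using Ib r zp by (intro mult_left_mono) auto
      have pos: "0 < \<beta> * (D ?r * (7/8 * (?r^3 * u)))" using bp D0 u r by simp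
      have le2: "\<beta> * (D ?r * (7/8 * (?r^3 * u))) \<le> \<beta> * V ?r" using Vbound[OF r] bp by (intro mult_left_mono) auto
      show ?thesis unfolding e_def by (rule frac_le[OF num0 le1 pos le2])
    qed
    also have "\<dots> = C * inverse (D ?r)"
      unfolding C_def using r u D0 x0 bp by (simp add: field_simps)
    finally show ?thesis using e0 by simp
  qed
  have elim: "e \<longlonglongrightarrow> 0"
    apply (rule tendsto_sandwich[where f="\<lambda>_. 0" and h="\<lambda>k. C * inverse (D (real k))"])
    using ebound eventually_sequentially invD by auto
  have "(\<lambda>k. - \<rho> + e k) \<longlonglongrightarrow> - \<rho> + 0" by (intro tendsto_intros elim)
  hence "(\<lambda>k. - \<rho> + e k) \<longlonglongrightarrow> - (lam * c ^ 4 / (8 * pi * G))"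
    unfolding \<rho>_def rho_vac_def by simp
  then show ?thesis
    apply (rule Lim_transform_eventually)
    using eq eventually_sequentially by (metis (mono_tags, lifting))
qed
end
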